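(* Let $\mathfrak B,\mathfrak D^+,\mathfrak D^-$ be Banach spaces and let $I^+\colon\mathfrak D^+\to\mathfrak B$, $I^-\colon\mathfrak B\to\mathfrak D^-$ be injective continuous linear embeddings with dense ranges. Let $T\colon\mathfrak D^+\to\mathfrak D^-$ be a bounded linear operator, and let $T^\bullet=(I^-)^{-1}T(I^+)^{-1}$ be the (generally unbounded) operator in $\mathfrak B$ with domain $\operatorname{dom}T^\bullet=\{x\in I^+(\mathfrak D^+)\;:\;T(I^+)^{-1}x\in I^-(\mathfrak B)\}$, acting by $T^\bullet x=(I^-)^{-1}T(I^+)^{-1}x$. Suppose that for some bounded operator $A\in\mathcal B(\mathfrak B)$ the operator $T-I^-AI^+\colon\mathfrak D^+\to\mathfrak D^-$ has a bounded inverse. Then $T^\bullet$ is closed and densely defined.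
   Context: "Has a bounded inverse" means: the operator is a bijection of $\mathfrak D^+$ onto $\mathfrak D^-$ with bounded inverse. *)

theory Defs
  imports "HOL-Analysis.Analysis"
begin

definition bullet_dom :: "('p \<Rightarrow> 'b) \<Rightarrow> ('b \<Rightarrow> 'm) \<Rightarrow> ('p \<Rightarrow> 'm) \<Rightarrow> 'b set" where
  "bullet_dom Jp Jm T = {x \<in> range Jp. T (inv Jp x) \<in> range Jm}"

definition bullet_op :: "('p \<Rightarrow> 'b) \<Rightarrow> ('b \<Rightarrow> 'm) \<Rightarrow> ('p \<Rightarrow> 'm) \<Rightarrow> 'b \<Rightarrow> 'b" where
  "bullet_op Jp Jm T x = inv Jm (T (inv Jp x))"

definition op_graph :: "'a set \<Rightarrow> ('a \<Rightarrow> 'c) \<Rightarrow> ('a \<times> 'c) set" where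
  "op_graph D f = {(x, f x) | x. x \<in> D}"

definition has_bounded_inverse :: "('a::real_normed_vector \<Rightarrow> 'c::real_normed_vector) \<Rightarrow> bool" where
  "has_bounded_inverse S \<longleftrightarrow> bij S \<and> bounded_linear (inv S)"

end

theory Submission
  imports Defs
begin

theorem mainTheorem1:
  fixes Jp :: "'p::banach \<Rightarrow> 'b::banach"
    and Jm :: "'b \<Rightarrow> 'm::banach"
    and T :: "'p \<Rightarrow> 'm"
    and A :: "'b \<Rightarrow> 'b"
  assumes "bounded_linear Jp" "inj Jp" "closure (range Jp) = UNIV"
    and "bounded_linear Jm" "inj Jm" "closure (range Jm) = UNIV"
    and "bounded_linear T"
    and "bounded_linear A"
    and "has_bounded_inverse (\<lambda>x. T x - Jm (A (Jp x)))"
  shows "closed (op_graph (bullet_dom Jp Jm T) (bullet_op Jp Jm T)) \<and>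
           closure (bullet_dom Jp Jm T) = UNIV"
proof -
  define S where "S = (\<lambda>x. T x - Jm (A (Jp x)))"
  define R where "R = inv S"
  define K where "K = (\<lambda>y. Jp (R (Jm y)))"
  have bS: "bij S" and bR: "bounded_linear R" using assms(9) unfolding has_bounded_inverse_def S_def R_def by auto
  have SR: "S (R q) = q" for q using bS unfolding R_def by (simp add: bij_is_surj surj_f_inv_f)
  have RS: "R (S p) = p" for p using bS unfolding R_def by (simp add: bij_is_inj inv_f_f)
  have iJp: "inv Jp (Jp p) = p" for p using assms(2) by simp
  have iJm: "inv Jm (Jm p) = p" for p using assms(5) by simp
  note lJm = bounded_linear.linear[OF assms(4)]
  have bK: "bounded_linear K" unfolding K_def
    by (intro bounded_linear_compose[OF assms(1)] bounded_linear_compose[OF bR] assms(4))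
  have dom: "x \<in> bullet_dom Jp Jm T \<longleftrightarrow> (\<exists>y. x = K y)" for x
  proof
    assume "x \<in> bullet_dom Jp Jm T"
    then obtain p w where x: "x = Jp p" and w: "T p = Jm w"
      unfolding bullet_dom_def by (auto simp: iJp)
    have "S p = Jm (w - A x)" unfolding S_def using w x by (simp add: linear_diff[OF lJm])
    hence "p = R (Jm (w - A x))" using RS by metis
    thus "\<exists>y. x = K y" unfolding K_def x by metis
  next
    assume "\<exists>y. x = K y"
    then obtain y where x: "x = K y" by auto
    have "T (R (Jm y)) = S (R (Jm y)) + Jm (A x)" unfolding S_def x K_def by simp
    also have "\<dots> = Jm (y + A x)" by (simp add: SR linear_add[OF lJm])
    finally show "x \<in> bullet_dom Jp Jm T" unfolding bullet_dom_def x K_def by (auto simp: iJp)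
  qed
  have op: "bullet_op Jp Jm T (K y) = y + A (K y)" for y
  proof -
    have "T (R (Jm y)) = S (R (Jm y)) + Jm (A (K y))" unfolding S_def K_def by simp
    also have "\<dots> = Jm (y + A (K y))" by (simp add: SR linear_add[OF lJm])
    finally show ?thesis unfolding bullet_op_def K_def by (simp add: iJp iJm)
  qed
  have graph: "op_graph (bullet_dom Jp Jm T) (bullet_op Jp Jm T) = {p. fst p - K (snd p - A (fst p)) = 0}"
  proof (intro set_eqI iffI)
    fix q assume "q \<in> op_graph (bullet_dom Jp Jm T) (bullet_op Jp Jm T)"
    then obtain x where q: "q = (x, bullet_op Jp Jm T x)" and "x \<in> bullet_dom Jp Jm T"
      unfolding op_graph_def by auto
    then obtain y where x: "x = K y" using dom by auto
    show "q \<in> {p. fst p - K (snd p - A (fst p)) = 0}" using q x op by simp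
  next
    fix q assume "q \<in> {p. fst p - K (snd p - A (fst p)) = 0}"
    then obtain x z where q: "q = (x, z)" and e: "x = K (z - A x)" by (cases q) auto
    have "x \<in> bullet_dom Jp Jm T" using dom e by blast
    moreover have "bullet_op Jp Jm T x = z" using op[of "z - A x"] e by simp
    ultimately show "q \<in> op_graph (bullet_dom Jp Jm T) (bullet_op Jp Jm T)"
      unfolding op_graph_def q by force
  qed
  have cont: "continuous_on UNIV (\<lambda>p. fst p - K (snd p - A (fst p)))"
    by (intro continuous_intros bounded_linear.continuous_on[OF bK]
         bounded_linear.continuous_on[OF assms(8)])
  have c1: "closed (op_graph (bullet_dom Jp Jm T) (bullet_op Jp Jm T))"
    unfolding graph by (rule closed_Collect_eq[OF cont]) (intro continuous_intros)
  have rd: "range K = bullet_dom Jp Jm T" using dom by auto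
  have cR: "continuous_on UNIV R" by (rule linear_continuous_on[OF bR])
  have cJp: "continuous_on UNIV Jp" by (rule linear_continuous_on[OF assms(1)])
  have sR: "range R = UNIV" using RS by (metis surj_def)
  have "range R \<subseteq> closure (R ` range Jm)"
  proof -
    have "R ` closure (range Jm) \<subseteq> closure (R ` range Jm)"
      by (rule image_closure_subset) (auto intro: continuous_on_subset[OF cR] closure_subset[THEN subsetD])
    thus ?thesis using assms(6) by simp
  qed
  hence 1: "closure (R ` range Jm) = UNIV" using sR by auto
  have "Jp ` closure (R ` range Jm) \<subseteq> closure (Jp ` (R ` range Jm))"
    by (rule image_closure_subset) (auto intro: continuous_on_subset[OF cJp] closure_subset[THEN subsetD])
  hence "range Jp \<subseteq> closure (range K)" using 1 unfolding K_def by (simp add: image_image)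
  hence "closure (range Jp) \<subseteq> closure (range K)" by (simp add: closure_minimal)
  hence c2: "closure (bullet_dom Jp Jm T) = UNIV" using assms(3) rd by auto
  show ?thesis using c1 c2 by simp
qed

end
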